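(* Let $n$, $m$ and $d$ be integers with $n\geq 5$, $m\geq 5$ and $d\geq 3$. Let $G\in T_{n,m}$, and let $v$ be a vertex of $G$ of degree $1$ whose unique neighbor is the terminal $s$. If $G-sv$ is not complete, then there exists $H\in T_{n,m}$ that is $d$-stronger than $G$.
   Context: All graphs are finite, simple and undirected. A two-terminal graph is a graph $G$ together with two distinguished vertices $s,t$ (the terminals). $T_{n,m}$ denotes the set of all pairwise nonisomorphic (with isomorphisms preserving the set of terminals) two-terminal graphs with $n$ vertices and $m$ edges. A two-terminal graph is called complete if the connected component containing both terminals is a complete graph. $G-sv$ is the two-terminal graph obtained from $G$ by deleting the edge $sv$. For a positive integer $d$, a $d$-pathset of a two-terminal graph $G$ is a spanning subgraph of $G$ containing a path of length (number of edges) at most $d$ joining $s$ and $t$; $N_i^d(G)$ is the number of $d$-pathsets of $G$ with exactly $i$ edges. For $G,H\in T_{n,m}$, $H$ is $d$-stronger than $G$ if $N_i^d(H)\geq N_i^d(G)$ for every $i\in\{1,\ldots,m\}$ and $N_j^d(H)>N_j^d(G)$ for some $j\in\{1,\ldots,m\}$. *)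

theory Defs
  imports Main
begin

definition tt_graph :: "'a set \<Rightarrow> 'a set set \<Rightarrow> 'a \<Rightarrow> 'a \<Rightarrow> bool" where
  "tt_graph V E s t \<longleftrightarrow> finite V \<and> s \<in> V \<and> t \<in> V \<and> s \<noteq> t \<and>
     (\<forall>e\<in>E. \<exists>u w. e = {u, w} \<and> u \<noteq> w \<and> u \<in> V \<and> w \<in> V)"

definition degree :: "'a set set \<Rightarrow> 'a \<Rightarrow> nat" where
  "degree E v = card {u. {u, v} \<in> E}"

definition is_path :: "'a set set \<Rightarrow> 'a list \<Rightarrow> 'a \<Rightarrow> 'a \<Rightarrow> bool" where
  "is_path F xs u w \<longleftrightarrow> xs \<noteq> [] \<and> hd xs = u \<and> last xs = w \<and> distinct xs \<and>
     (\<forall>i. Suc i < length xs \<longrightarrow> {xs ! i, xs ! Suc i} \<in> F)"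

definition d_pathset :: "nat \<Rightarrow> 'a set set \<Rightarrow> 'a \<Rightarrow> 'a \<Rightarrow> 'a set set \<Rightarrow> bool" where
  "d_pathset d E s t F \<longleftrightarrow> F \<subseteq> E \<and> (\<exists>xs. is_path F xs s t \<and> length xs - 1 \<le> d)"

definition N :: "nat \<Rightarrow> nat \<Rightarrow> 'a set set \<Rightarrow> 'a \<Rightarrow> 'a \<Rightarrow> nat" where
  "N d i E s t = card {F. d_pathset d E s t F \<and> card F = i}"

definition d_stronger ::
  "nat \<Rightarrow> nat \<Rightarrow> 'a set set \<Rightarrow> 'a \<Rightarrow> 'a \<Rightarrow> 'b set set \<Rightarrow> 'b \<Rightarrow> 'b \<Rightarrow> bool" where
  "d_stronger d m EH sH tH EG sG tG \<longleftrightarrow>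
     (\<forall>i\<in>{1..m}. N d i EH sH tH \<ge> N d i EG sG tG) \<and>
     (\<exists>j\<in>{1..m}. N d j EH sH tH > N d j EG sG tG)"

definition adj :: "'a set set \<Rightarrow> 'a \<Rightarrow> 'a \<Rightarrow> bool" where
  "adj E u w \<longleftrightarrow> {u, w} \<in> E"

definition tt_complete :: "'a set set \<Rightarrow> 'a \<Rightarrow> 'a \<Rightarrow> bool" where
  "tt_complete E s t \<longleftrightarrow> (adj E)\<^sup>*\<^sup>* s t \<and>
     (\<forall>u w. (adj E)\<^sup>*\<^sup>* s u \<and> (adj E)\<^sup>*\<^sup>* s w \<and> u \<noteq> w \<longrightarrow> {u, w} \<in> E)"

end

theory Submission
  imports Defs
begin

lemma path_mono: "is_path F xs u w \<Longrightarrow> F \<subseteq> F' \<Longrightarrow> is_path F' xs u w"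
  unfolding is_path_def by blast

lemma no_path:
  assumes "s \<in> S" "t \<notin> S" "\<And>x y. {x,y} \<in> F \<Longrightarrow> x \<in> S \<Longrightarrow> y \<in> S"
  shows "\<not> is_path F xs s t"
proof
  assume p: "is_path F xs s t"
  have "\<forall>i. i < length xs \<longrightarrow> xs ! i \<in> S"
  proof
    fix i show "i < length xs \<longrightarrow> xs ! i \<in> S"
    proof (induction i)
      case 0 then show ?case using p assms(1) unfolding is_path_def by (metis hd_conv_nth)
    next
      case (Suc i)
      then show ?case using p assms(3)[of "xs ! i" "xs ! Suc i"] unfolding is_path_def by auto
    qed
  qed
  then have "last xs \<in> S" using p unfolding is_path_def by (metis diff_less last_conv_nth length_greater_0_conv zero_less_one)
  then show False using p assms(2) by (simp add: is_path_def)
qed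

lemma avoid:
  assumes p: "is_path F xs s t" and FE: "F \<subseteq> E" and vs: "v \<noteq> s" and vt: "v \<noteq> t"
    and nb: "\<And>u. {u,v} \<in> E \<Longrightarrow> u = s"
  shows "is_path (F - {{s,v}}) xs s t"
  unfolding is_path_def
proof (intro conjI allI impI)
  show "xs \<noteq> []" "hd xs = s" "last xs = t" "distinct xs" using p by (auto simp: is_path_def)
  fix i assume i: "Suc i < length xs"
  have e: "{xs ! i, xs ! Suc i} \<in> F" using p i by (auto simp: is_path_def)
  have d: "distinct xs" using p by (auto simp: is_path_def)
  have "{xs ! i, xs ! Suc i} \<noteq> {s, v}"
  proof
    assume eq: "{xs ! i, xs ! Suc i} = {s, v}"
    then consider "xs ! i = s" "xs ! Suc i = v" | "xs ! i = v" "xs ! Suc i = s"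
      by (auto simp: doubleton_eq_iff)
    then show False
    proof cases
      case 1
      have "Suc i \<noteq> length xs - 1" using p 1 vt by (auto simp: is_path_def last_conv_nth)
      then have i2: "Suc (Suc i) < length xs" using i by linarith
      then have "{xs ! Suc i, xs ! Suc (Suc i)} \<in> E" using p FE by (auto simp: is_path_def)
      then have "xs ! Suc (Suc i) = s" using nb 1 by (metis insert_commute)
      then have "xs ! Suc (Suc i) = xs ! i" using 1 by simp
      then show False using d i2 by (simp add: nth_eq_iff_index_eq)
    next
      case 2
      have "i \<noteq> 0"
      proof
        assume "i = 0" then show False using p 2 vs unfolding is_path_def by (metis hd_conv_nth)
      qed
      then obtain j where j: "i = Suc j" by (cases i) auto
      have "{xs ! j, xs ! Suc j} \<in> E" using p FE i j by (auto simp: is_path_def)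
      then have "xs ! j = s" using nb 2 j by simp
      then have "xs ! j = xs ! Suc i" using 2 by simp
      then show False using d i j by (simp add: nth_eq_iff_index_eq)
    qed
  qed
  then show "{xs ! i, xs ! Suc i} \<in> F - {{s, v}}" using e by simp
qed

lemma stronger_crit:
  assumes finH: "finite EH"
    and inj: "inj_on \<phi> {F. d_pathset d EG sG tG F}"
    and mp: "\<And>F. d_pathset d EG sG tG F \<Longrightarrow> d_pathset d EH sH tH (\<phi> F) \<and> card (\<phi> F) = card F"
    and W: "d_pathset d EH sH tH W" "W \<notin> \<phi> ` {F. d_pathset d EG sG tG F}" "card W \<in> {1..m}"
  shows "d_stronger d m EH sH tH EG sG tG"
proof -
  define PG where "PG i = {F. d_pathset d EG sG tG F \<and> card F = i}" for i
  define PH where "PH i = {F. d_pathset d EH sH tH F \<and> card F = i}" for i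
  have finPH: "finite (PH i)" for i
    by (rule finite_subset[of _ "Pow EH"]) (auto simp: PH_def d_pathset_def finH)
  have injG: "inj_on \<phi> (PG i)" for i by (rule inj_on_subset[OF inj]) (auto simp: PG_def)
  have sub: "\<phi> ` PG i \<subseteq> PH i" for i using mp by (auto simp: PG_def PH_def)
  have le: "card (PG i) \<le> card (PH i)" for i
    using card_inj_on_le[OF injG sub finPH] .
  have "W \<in> PH (card W)" using W by (simp add: PH_def)
  moreover have "W \<notin> \<phi> ` PG (card W)" using W by (auto simp: PG_def)
  ultimately have "\<phi> ` PG (card W) \<subset> PH (card W)"
    using sub by blast
  then have "card (\<phi> ` PG (card W)) < card (PH (card W))" using finPH psubset_card_mono by blast
  then have lt: "card (PG (card W)) < card (PH (card W))" using card_image[OF injG] by simp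
  have NG: "N d i EG sG tG = card (PG i)" "N d i EH sH tH = card (PH i)" for i
    by (simp_all add: N_def PG_def PH_def)
  show ?thesis unfolding d_stronger_def NG using le W(3) lt by blast
qed


lemma card_swap:
  assumes "finite F" "b \<in> F" "a \<notin> F"
  shows "card (insert a (F - {b})) = card F"
proof -
  have "card F > 0" using assms card_gt_0_iff by blast
  moreover have "a \<notin> F - {b}" using assms by simp
  ultimately show ?thesis using assms by (simp add: card_Diff_singleton)
qed

lemma main_case:
  assumes g: "tt_graph V E s t" and fin: "finite E" and sv: "{s,v} \<in> E"
    and vs: "v \<noteq> s" and vt: "v \<noteq> t" and nb: "\<And>u. {u,v} \<in> E \<Longrightarrow> u = s"
    and xy: "x \<noteq> y" "x \<in> V" "y \<in> V" "{x,y} \<notin> E"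
    and W: "W \<subseteq> insert {x,y} (E - {{s,v}})" "{x,y} \<in> W" "is_path W xs s t" "length xs - 1 \<le> d"
    and Wn: "\<And>ys. \<not> is_path (W - {{x,y}}) ys s t" and cW: "card W \<le> card E"
  shows "tt_graph V (insert {x,y} (E - {{s,v}})) s t \<and> card (insert {x,y} (E - {{s,v}})) = card E
     \<and> d_stronger d (card E) (insert {x,y} (E - {{s,v}})) s t E s t"
proof (intro conjI)
  define H where "H = insert {x,y} (E - {{s,v}})"
  have ge: "\<forall>e\<in>E. \<exists>u w. e = {u, w} \<and> u \<noteq> w \<and> u \<in> V \<and> w \<in> V" using g by (simp add: tt_graph_def)
  have "\<forall>e\<in>insert {x,y} (E - {{s,v}}). \<exists>u w. e = {u, w} \<and> u \<noteq> w \<and> u \<in> V \<and> w \<in> V"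
  proof
    fix e assume "e \<in> insert {x,y} (E - {{s,v}})"
    then consider "e = {x,y}" | "e \<in> E" by blast
    then show "\<exists>u w. e = {u, w} \<and> u \<noteq> w \<and> u \<in> V \<and> w \<in> V"
    proof cases
      case 1 then show ?thesis using xy by blast
    next
      case 2 then show ?thesis using ge by blast
    qed
  qed
  then show "tt_graph V (insert {x,y} (E - {{s,v}})) s t" using g unfolding tt_graph_def by simp
  show "card (insert {x,y} (E - {{s,v}})) = card E"
    using card_swap[OF fin sv xy(4)] .
  define \<phi> where "\<phi> F = (if {s,v} \<in> F then insert {x,y} (F - {{s,v}}) else F)" for F
  have finH: "finite H" using fin by (simp add: H_def)
  have inj: "inj_on \<phi> {F. d_pathset d E s t F}"
  proof (rule inj_onI)
    fix F1 F2 assume F1: "F1 \<in> {F. d_pathset d E s t F}" and F2: "F2 \<in> {F. d_pathset d E s t F}"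
      and eq: "\<phi> F1 = \<phi> F2"
    have s1: "F1 \<subseteq> E" "F2 \<subseteq> E" using F1 F2 by (auto simp: d_pathset_def)
    then have n1: "{x,y} \<notin> F1" "{x,y} \<notin> F2" using xy(4) by auto
    show "F1 = F2"
    proof (cases "{s,v} \<in> F1"; cases "{s,v} \<in> F2")
      assume a: "{s,v} \<in> F1" "{s,v} \<in> F2"
      then have "insert {x,y} (F1 - {{s,v}}) = insert {x,y} (F2 - {{s,v}})" using eq by (simp add: \<phi>_def)
      then have eq': "insert {x,y} (F1 - {{s,v}}) - {{x,y}} = insert {x,y} (F2 - {{s,v}}) - {{x,y}}" by simp
      have "F1 - {{s,v}} = insert {x,y} (F1 - {{s,v}}) - {{x,y}}" using n1 by auto
      also have "\<dots> = insert {x,y} (F2 - {{s,v}}) - {{x,y}}" using eq' .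
      also have "\<dots> = F2 - {{s,v}}" using n1 by auto
      finally have "F1 - {{s,v}} = F2 - {{s,v}}" .
      then show ?thesis using a by (metis insert_Diff)
    next
      assume a: "{s,v} \<in> F1" "{s,v} \<notin> F2"
      then have "{x,y} \<in> F2" using eq by (auto simp: \<phi>_def)
      then show ?thesis using n1 by simp
    next
      assume a: "{s,v} \<notin> F1" "{s,v} \<in> F2"
      then have "{x,y} \<in> F1" using eq by (auto simp: \<phi>_def)
      then show ?thesis using n1 by simp
    next
      assume a: "{s,v} \<notin> F1" "{s,v} \<notin> F2"
      then show ?thesis using eq by (simp add: \<phi>_def)
    qed
  qed
  have mp: "d_pathset d H s t (\<phi> F) \<and> card (\<phi> F) = card F" if F: "d_pathset d E s t F" for F
  proof -
    obtain zs where FE: "F \<subseteq> E" and p: "is_path F zs s t" "length zs - 1 \<le> d"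
      using F by (auto simp: d_pathset_def)
    have finF: "finite F" using FE fin finite_subset by blast
    have nF: "{x,y} \<notin> F" using FE xy(4) by auto
    show ?thesis
    proof (cases "{s,v} \<in> F")
      case True
      have "is_path (F - {{s,v}}) zs s t" using avoid[OF p(1) FE vs vt nb] .
      then have "is_path (\<phi> F) zs s t" using True by (auto simp: \<phi>_def intro: path_mono)
      moreover have "\<phi> F \<subseteq> H" using True FE by (auto simp: \<phi>_def H_def)
      moreover have "card (\<phi> F) = card F" using card_swap[OF finF True nF] True by (simp add: \<phi>_def)
      ultimately show ?thesis using p by (auto simp: d_pathset_def)
    next
      case False
      then show ?thesis using F FE by (auto simp: \<phi>_def d_pathset_def H_def)
    qed
  qed
  have Wp: "d_pathset d H s t W" using W by (auto simp: d_pathset_def H_def)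
  have Wni: "W \<notin> \<phi> ` {F. d_pathset d E s t F}"
  proof
    assume "W \<in> \<phi> ` {F. d_pathset d E s t F}"
    then obtain F where F: "d_pathset d E s t F" and WF: "W = \<phi> F" by auto
    obtain zs where FE: "F \<subseteq> E" and p: "is_path F zs s t"
      using F by (auto simp: d_pathset_def)
    have nF: "{x,y} \<notin> F" using FE xy(4) by auto
    show False
    proof (cases "{s,v} \<in> F")
      case True
      then have "W - {{x,y}} = F - {{s,v}}" using WF nF by (auto simp: \<phi>_def)
      then show False using avoid[OF p FE vs vt nb] Wn by metis
    next
      case False
      then show False using WF nF W(2) by (simp add: \<phi>_def)
    qed
  qed
  have "finite W" using finite_subset[OF W(1)] fin by simp
  then have "card W \<in> {1..card E}" using W(2) cW by (auto simp: Suc_le_eq card_gt_0_iff)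
  then show "d_stronger d (card E) (insert {x,y} (E - {{s,v}})) s t E s t"
    using stronger_crit[OF finH inj mp Wp Wni] by (simp add: H_def)
qed


lemma path_last_edge:
  assumes p: "is_path F xs s t" and st: "s \<noteq> t" and FE: "F \<subseteq> E"
    and nbt: "\<And>u. {u,t} \<in> E \<Longrightarrow> u = s"
  shows "{s,t} \<in> F"
proof -
  have ne: "xs \<noteq> []" and l: "last xs = t" and h: "hd xs = s" using p by (auto simp: is_path_def)
  have "length xs \<noteq> 1"
  proof
    assume "length xs = 1"
    then obtain z where "xs = [z]" by (metis One_nat_def length_0_conv length_Suc_conv)
    then show False using h l st by simp
  qed
  then have len: "Suc (length xs - 2) < length xs" "Suc (length xs - 2) = length xs - 1"
    using ne by (cases xs; auto)+
  then have e: "{xs ! (length xs - 2), xs ! Suc (length xs - 2)} \<in> F" using p len(1) unfolding is_path_def by blast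
  have "xs ! Suc (length xs - 2) = t" using len(2) l ne by (simp add: last_conv_nth)
  then have e2: "{xs ! (length xs - 2), t} \<in> F" using e by simp
  then have "xs ! (length xs - 2) = s" using FE nbt by blast
  then show ?thesis using e2 by simp
qed

lemma path2: "s \<noteq> t \<Longrightarrow> is_path {{s,t}} [s,t] s t"
  unfolding is_path_def by auto

lemma path3: "distinct [s,a,t] \<Longrightarrow> {{s,a},{a,t}} \<subseteq> F \<Longrightarrow> is_path F [s,a,t] s t"
  unfolding is_path_def by (auto simp: less_Suc_eq nth_Cons split: nat.splits)

lemma path4: "distinct [s,a,b,t] \<Longrightarrow> {{s,a},{a,b},{b,t}} \<subseteq> F \<Longrightarrow> is_path F [s,a,b,t] s t"
  unfolding is_path_def by (auto simp: less_Suc_eq nth_Cons split: nat.splits)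

lemma pendant_t_case:
  assumes g: "tt_graph V E s t" and fin: "finite E" and st: "{s,t} \<in> E"
    and nbt: "\<And>u. {u,t} \<in> E \<Longrightarrow> u = s" and a: "a \<in> V" "a \<noteq> s" "a \<noteq> t"
    and m3: "card E \<ge> 3" and d2: "d \<ge> 2"
  shows "\<exists>E'. tt_graph V E' s t \<and> card E' = card E \<and> d_stronger d (card E) E' s t E s t"
proof -
  have sV: "s \<in> V" "t \<in> V" "s \<noteq> t" "finite V" using g by (auto simp: tt_graph_def)
  define P where "P = {{x,y}|x y. x \<in> V \<and> y \<in> V \<and> x \<noteq> y}"
  have finP: "finite P" by (rule finite_subset[of _ "Pow V"]) (auto simp: P_def sV)
  have EP: "E \<subseteq> P"
  proof
    fix e assume "e \<in> E"
    then obtain u w where "e = {u, w}" "u \<noteq> w" "u \<in> V" "w \<in> V" using g unfolding tt_graph_def by blast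
    then show "e \<in> P" unfolding P_def by blast
  qed
  define X where "X = {{s,t},{s,a},{a,t}}"
  have XP: "X \<subseteq> P" using a sV by (auto simp: X_def P_def)
  have cX: "card X = 3" using a sV by (auto simp: X_def doubleton_eq_iff)
  have "card E \<le> card P" using card_mono[OF finP EP] .
  then have "card E - 3 \<le> card (P - X)" using card_Diff_subset[OF finite_subset[OF XP finP] XP] cX by simp
  then obtain R where R: "R \<subseteq> P - X" "card R = card E - 3" "finite R"
    by (rule obtain_subset_with_card_n)
  define H where "H = R \<union> X"
  have finX: "finite X" by (simp add: X_def)
  have "R \<inter> X = {}" using R(1) by blast
  then have "card H = card R + card X" using card_Un_disjoint[OF R(3) finX] by (simp add: H_def)
  then have cH: "card H = card E" using R(2) cX m3 by simp
  have finH: "finite H" using R finX by (simp add: H_def)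
  have HP: "H \<subseteq> P" using R(1) XP by (auto simp: H_def)
  have "\<forall>e\<in>H. \<exists>u w. e = {u, w} \<and> u \<noteq> w \<and> u \<in> V \<and> w \<in> V"
  proof
    fix e assume "e \<in> H"
    then have "e \<in> P" using HP by blast
    then show "\<exists>u w. e = {u, w} \<and> u \<noteq> w \<and> u \<in> V \<and> w \<in> V" unfolding P_def by blast
  qed
  then have gH: "tt_graph V H s t" using sV unfolding tt_graph_def by simp
  have stH: "{s,t} \<in> H" by (simp add: H_def X_def)
  have "card (E - {{s,t}}) = card (H - {{s,t}})" using cH st stH fin finH by (simp add: card_Diff_singleton)
  then obtain \<psi> where psi: "bij_betw \<psi> (E - {{s,t}}) (H - {{s,t}})"
    using finite_same_card_bij[of "E - {{s,t}}" "H - {{s,t}}"] fin finH by blast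
  define \<phi> where "\<phi> F = insert {s,t} (\<psi> ` (F - {{s,t}}))" for F
  have inPs: "{s,t} \<in> F \<and> F \<subseteq> E" if "d_pathset d E s t F" for F
    using that path_last_edge[OF _ sV(3) _ nbt] by (auto simp: d_pathset_def)
  have imgE: "\<psi> ` (E - {{s,t}}) = H - {{s,t}}" using psi by (simp add: bij_betw_def)
  have img: "\<psi> ` (F - {{s,t}}) \<subseteq> H - {{s,t}}" if "F \<subseteq> E" for F
  proof -
    have "F - {{s,t}} \<subseteq> E - {{s,t}}" using that by blast
    then show ?thesis using image_mono[of "F - {{s,t}}" "E - {{s,t}}" \<psi>] imgE by simp
  qed
  have injpsi: "inj_on \<psi> (E - {{s,t}})" using psi by (simp add: bij_betw_def)
  have phim: "\<phi> F - {{s,t}} = \<psi> ` (F - {{s,t}})" if "F \<subseteq> E" for F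
    using img[OF that] by (auto simp: \<phi>_def)
  have inj: "inj_on \<phi> {F. d_pathset d E s t F}"
  proof (rule inj_onI)
    fix F1 F2 assume F1: "F1 \<in> {F. d_pathset d E s t F}" and F2: "F2 \<in> {F. d_pathset d E s t F}"
      and eq: "\<phi> F1 = \<phi> F2"
    have a1: "{s,t} \<in> F1" "F1 \<subseteq> E" using inPs F1 by auto
    have a2: "{s,t} \<in> F2" "F2 \<subseteq> E" using inPs F2 by auto
    have "\<psi> ` (F1 - {{s,t}}) = \<psi> ` (F2 - {{s,t}})" using phim a1 a2 eq by metis
    moreover have "F1 - {{s,t}} \<subseteq> E - {{s,t}}" "F2 - {{s,t}} \<subseteq> E - {{s,t}}" using a1 a2 by blast+
    ultimately have "F1 - {{s,t}} = F2 - {{s,t}}"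
      using inj_on_image_eq_iff[OF injpsi] by simp
    then show "F1 = F2" using a1 a2 by (metis insert_Diff)
  qed
  have mp: "d_pathset d H s t (\<phi> F) \<and> card (\<phi> F) = card F" if F: "d_pathset d E s t F" for F
  proof -
    have a1: "{s,t} \<in> F" "F \<subseteq> E" using inPs F by auto
    have finF: "finite F" using a1 fin finite_subset by blast
    have sub: "\<phi> F \<subseteq> H" using img[OF a1(2)] stH by (auto simp: \<phi>_def)
    have "is_path (\<phi> F) [s,t] s t" using path2[OF sV(3)] by (rule path_mono) (simp add: \<phi>_def)
    then have dp: "d_pathset d H s t (\<phi> F)" using sub d2 by (auto simp: d_pathset_def)
    have injF: "inj_on \<psi> (F - {{s,t}})" by (rule inj_on_subset[OF injpsi]) (use a1 in blast)
    have "card (\<psi> ` (F - {{s,t}})) = card F - 1" using card_image[OF injF] a1 finF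
      by (simp add: card_Diff_singleton)
    moreover have "{s,t} \<notin> \<psi> ` (F - {{s,t}})" using img[OF a1(2)] by blast
    moreover have "card F > 0" using a1 finF card_gt_0_iff by blast
    ultimately have "card (\<phi> F) = card F" using finF by (simp add: \<phi>_def)
    then show ?thesis using dp by simp
  qed
  define W where "W = {{s,a},{a,t}}"
  have WH: "W \<subseteq> H" by (auto simp: W_def H_def X_def)
  have "is_path W [s,a,t] s t" using path3[of s a t W] a sV by (simp add: W_def)
  then have Wp: "d_pathset d H s t W" using WH d2 by (auto simp: d_pathset_def)
  have stW: "{s,t} \<notin> W" using a sV by (auto simp: W_def doubleton_eq_iff)
  have Wni: "W \<notin> \<phi> ` {F. d_pathset d E s t F}" using stW by (auto simp: \<phi>_def)
  have "card W = 2" using a sV by (auto simp: W_def doubleton_eq_iff)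
  then have "card W \<in> {1..card E}" using m3 by simp
  then have "d_stronger d (card E) H s t E s t"
    using stronger_crit[OF finH inj mp Wp Wni] by simp
  then show ?thesis using gH cH by blast
qed


lemma exists_e:
  assumes g: "tt_graph V E s t" and sv: "{s,v} \<in> E" and vs: "v \<noteq> s" and vt: "v \<noteq> t"
    and nb: "\<And>u. {u,v} \<in> E \<Longrightarrow> u = s"
    and nc: "\<not> tt_complete (E - {{s,v}}) s t"
  shows "\<exists>x y W xs. x \<noteq> y \<and> x \<in> V \<and> y \<in> V \<and> {x,y} \<notin> E \<and> W \<subseteq> insert {x,y} (E - {{s,v}})
     \<and> {x,y} \<in> W \<and> is_path W xs s t \<and> length xs \<le> 4 \<and> card W \<le> 3
     \<and> (\<forall>ys. \<not> is_path (W - {{x,y}}) ys s t)"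
proof (rule ccontr)
  assume nt: "\<not> ?thesis"
  define G' where "G' = E - {{s,v}}"
  have ed: "p \<noteq> q \<and> p \<in> V \<and> q \<in> V" if "{p,q} \<in> E" for p q
    using g that unfolding tt_graph_def by (metis doubleton_eq_iff)
  have sV: "s \<in> V" "t \<in> V" "s \<noteq> t" using g by (auto simp: tt_graph_def)
  have inG1: "{p,q} \<in> G'" if "{p,q} \<in> E" "p \<noteq> s" "q \<noteq> s" for p q
    using that by (auto simp: G'_def doubleton_eq_iff)
  have inG2: "{s,q} \<in> G'" if "{s,q} \<in> E" "q \<noteq> v" for q
    using that by (auto simp: G'_def doubleton_eq_iff)
  have GE: "G' \<subseteq> E" by (auto simp: G'_def)
  have st: "{s,t} \<in> E"
  proof (rule ccontr)
    assume n: "{s,t} \<notin> E"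
    have "is_path {{s,t}} [s,t] s t" using path2[OF sV(3)] .
    moreover have "\<not> is_path ({{s,t}} - {{s,t}}) ys s t" for ys
      by (rule no_path[where S="{s}"]) (use sV in auto)
    ultimately show False using nt n sV
      apply -
      apply (erule notE)
      apply (rule exI[of _ s], rule exI[of _ t], rule exI[of _ "{{s,t}}"], rule exI[of _ "[s,t]"])
      by auto
  qed
  have cA: "{a,t} \<in> E" if "{s,a} \<in> G'" "a \<noteq> t" for a
  proof (rule ccontr)
    assume n: "{a,t} \<notin> E"
    have e: "s \<noteq> a" "a \<in> V" using ed that GE by auto
    have "is_path {{s,a},{a,t}} [s,a,t] s t" using path3[of s a t] e that sV by auto
    moreover have "\<not> is_path ({{s,a},{a,t}} - {{a,t}}) ys s t" for ys
      by (rule no_path[where S="{s,a}"]) (use sV e that in \<open>auto simp: doubleton_eq_iff\<close>)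
    ultimately show False using nt n sV e that
      apply -
      apply (erule notE)
      apply (rule exI[of _ a], rule exI[of _ t], rule exI[of _ "{{s,a},{a,t}}"], rule exI[of _ "[s,a,t]"])
      by (auto simp: G'_def card_insert_if)
  qed
  have cB: "{s,a} \<in> E" if "{a,t} \<in> G'" "a \<noteq> s" for a
  proof (rule ccontr)
    assume n: "{s,a} \<notin> E"
    have e: "a \<noteq> t" "a \<in> V" using ed that GE by auto
    have "is_path {{s,a},{a,t}} [s,a,t] s t" using path3[of s a t] e that sV by auto
    moreover have "\<not> is_path ({{s,a},{a,t}} - {{s,a}}) ys s t" for ys
      by (rule no_path[where S="{s}"]) (use sV e that in \<open>auto simp: doubleton_eq_iff\<close>)
    ultimately show False using nt n sV e that
      apply -
      apply (erule notE)
      apply (rule exI[of _ s], rule exI[of _ a], rule exI[of _ "{{s,a},{a,t}}"], rule exI[of _ "[s,a,t]"])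
      by (auto simp: G'_def card_insert_if)
  qed
  have cC: "{a,b} \<in> E" if "{s,a} \<in> G'" "{b,t} \<in> G'" "a \<noteq> t" "b \<noteq> s" "a \<noteq> b" for a b
  proof (rule ccontr)
    assume n: "{a,b} \<notin> E"
    have e: "s \<noteq> a" "a \<in> V" "b \<noteq> t" "b \<in> V" using ed that GE by auto
    have "is_path {{s,a},{a,b},{b,t}} [s,a,b,t] s t" using path4[of s a b t] e that sV by auto
    moreover have "\<not> is_path ({{s,a},{a,b},{b,t}} - {{a,b}}) ys s t" for ys
      by (rule no_path[where S="{s,a}"]) (use sV e that in \<open>auto simp: doubleton_eq_iff\<close>)
    ultimately show False using nt n sV e that
      apply -
      apply (erule notE)
      apply (rule exI[of _ a], rule exI[of _ b], rule exI[of _ "{{s,a},{a,b},{b,t}}"], rule exI[of _ "[s,a,b,t]"])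
      by (auto simp: G'_def card_insert_if)
  qed
  have cD: "{s,x} \<in> E" if "{s,k} \<in> G'" "{k,t} \<in> G'" "{x,k} \<in> G'" "x \<noteq> s" for x k
  proof (rule ccontr)
    assume n: "{s,x} \<notin> E"
    have e: "s \<noteq> k" "k \<noteq> t" "x \<noteq> k" "x \<in> V" "k \<in> V" using ed that GE by auto
    have xt: "x \<noteq> t" using n st by auto
    have "is_path {{s,x},{x,k},{k,t}} [s,x,k,t] s t" using path4[of s x k t] e xt that sV by auto
    moreover have "\<not> is_path ({{s,x},{x,k},{k,t}} - {{s,x}}) ys s t" for ys
      by (rule no_path[where S="{s}"]) (use sV e xt that in \<open>auto simp: doubleton_eq_iff\<close>)
    ultimately show False using nt n sV e xt that
      apply -
      apply (erule notE)
      apply (rule exI[of _ s], rule exI[of _ x], rule exI[of _ "{{s,x},{x,k},{k,t}}"], rule exI[of _ "[s,x,k,t]"])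
      by (auto simp: G'_def card_insert_if)
  qed
  define Q where "Q = {u. u = s \<or> {s,u} \<in> G'}"
  have reach: "u \<in> Q" if "(adj G')\<^sup>*\<^sup>* s u" for u
    using that
  proof (induction rule: rtranclp_induct)
    case base then show ?case by (simp add: Q_def)
  next
    case (step u w)
    have uw: "{u,w} \<in> G'" using step(2) by (simp add: adj_def)
    show ?case
    proof (cases "w = s \<or> u = s")
      case True then show ?thesis using uw by (auto simp: Q_def)
    next
      case False
      have su: "{s,u} \<in> G'" using step(3) False by (simp add: Q_def)
      have wv: "w \<noteq> v"
      proof
        assume "w = v" then have "{u,v} \<in> E" using uw GE by auto
        then show False using nb False by auto
      qed
      show ?thesis
      proof (cases "u = t")
        case True
        have "{w,t} \<in> G'" using uw True by (simp add: insert_commute)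
        then have "{s,w} \<in> E" using cB False by blast
        then show ?thesis using inG2 wv by (simp add: Q_def)
      next
        case ut: False
        have "{u,t} \<in> E" using cA su ut by blast
        then have "{u,t} \<in> G'" using inG1 False sV by blast
        moreover have "{w,u} \<in> G'" using uw by (simp add: insert_commute)
        ultimately have "{s,w} \<in> E" using cD su False by blast
        then show ?thesis using inG2 wv by (simp add: Q_def)
      qed
    qed
  qed
  have comp: "{u,w} \<in> G'" if "u \<in> Q" "w \<in> Q" "u \<noteq> w" for u w
  proof -
    consider "u = s" | "w = s" | "u \<noteq> s" "w \<noteq> s" by blast
    then show ?thesis
    proof cases
      case 1 then show ?thesis using that by (simp add: Q_def)
    next
      case 2 then show ?thesis using that by (auto simp: Q_def insert_commute)
    next
      case 3
      have su: "{s,u} \<in> G'" "{s,w} \<in> G'" using 3 that by (auto simp: Q_def)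
      consider "u = t" | "w = t" | "u \<noteq> t" "w \<noteq> t" by blast
      then show ?thesis
      proof cases
        case 1
        then show ?thesis using cA[OF su(2)] that inG1 3 by (auto simp: insert_commute)
      next
        case 2
        then show ?thesis using cA[OF su(1)] that inG1 3 by (auto simp: insert_commute)
      next
        case 4: 3
        have "{w,t} \<in> G'" using cA[OF su(2)] 4 inG1 3 sV by blast
        then have "{u,w} \<in> E" using cC[OF su(1)] 4 3 that by blast
        then show ?thesis using inG1 3 by blast
      qed
    qed
  qed
  have "(adj G')\<^sup>*\<^sup>* s t"
  proof -
    have "{s,t} \<in> G'" using inG2[OF st] vt by simp
    then show ?thesis by (simp add: adj_def r_into_rtranclp)
  qed
  then have "tt_complete G' s t" unfolding tt_complete_def using reach comp by blast
  then show False using nc by (simp add: G'_def)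
qed


theorem lemma6:
  fixes V :: "'a set" and E :: "'a set set" and s t v :: 'a and n m d :: nat
  assumes "n \<ge> 5" and "m \<ge> 5" and "d \<ge> 3"
    and "tt_graph V E s t" and "card V = n" and "card E = m"
    and "v \<in> V" and "degree E v = 1" and "{s, v} \<in> E"
    and "\<not> tt_complete (E - {{s, v}}) s t"
  shows "\<exists>(V'::'a set) E' s' t'. tt_graph V' E' s' t' \<and> card V' = n \<and> card E' = m \<and>
           d_stronger d m E' s' t' E s t"
proof -
  note g = assms(4) and sv = assms(9)
  have fin: "finite E" using assms(2,6) card_ge_0_finite[of E] by simp
  have sV: "s \<in> V" "t \<in> V" "s \<noteq> t" "finite V" using g by (auto simp: tt_graph_def)
  have vs: "v \<noteq> s"
  proof
    assume "v = s"
    then have "{s} \<in> E" using sv by simp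
    then obtain u w where uw: "{s} = {u, w}" "u \<noteq> w" using g unfolding tt_graph_def by blast
    have "u \<in> {s}" "w \<in> {s}" using uw(1) by blast+
    then show False using uw(2) by simp
  qed
  have "card {u. {u, v} \<in> E} = 1" using assms(8) by (simp add: degree_def)
  then obtain z where z: "{u. {u, v} \<in> E} = {z}" by (rule card_1_singletonE)
  have "s = z" using z sv by blast
  then have nb: "\<And>u. {u,v} \<in> E \<Longrightarrow> u = s" using z by blast
  show ?thesis
  proof (cases "v = t")
    case True
    have "card (V - {s,t}) \<ge> 3" using sV assms(1,5) by (simp add: card_Diff_subset)
    then have "V - {s,t} \<noteq> {}" by (metis card.empty not_numeral_le_zero)
    then obtain a where a0: "a \<in> V - {s,t}" by blast
    then have a: "a \<in> V" "a \<noteq> s" "a \<noteq> t" by simp_all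
    have st: "{s,t} \<in> E" using sv True by simp
    have nbt: "\<And>u. {u,t} \<in> E \<Longrightarrow> u = s" using nb True by simp
    have m3: "card E \<ge> 3" and d2: "d \<ge> 2" using assms(2,3,6) by simp_all
    obtain E' where E': "tt_graph V E' s t" "card E' = card E" "d_stronger d (card E) E' s t E s t"
      using pendant_t_case[OF g fin st nbt a(1) a(2) a(3) m3 d2] by blast
    show ?thesis
      by (rule exI[of _ V], rule exI[of _ E'], rule exI[of _ s], rule exI[of _ t]) (use E' assms(5,6) in simp)
  next
    case False
    have ex: "\<exists>x y W xs. x \<noteq> y \<and> x \<in> V \<and> y \<in> V \<and> {x,y} \<notin> E \<and> W \<subseteq> insert {x,y} (E - {{s,v}})
     \<and> {x,y} \<in> W \<and> is_path W xs s t \<and> length xs \<le> 4 \<and> card W \<le> 3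
     \<and> (\<forall>ys. \<not> is_path (W - {{x,y}}) ys s t)"
      by (rule exists_e[OF g sv vs False nb assms(10)])
    then obtain x y W xs where w: "x \<noteq> y \<and> x \<in> V \<and> y \<in> V \<and> {x,y} \<notin> E \<and> W \<subseteq> insert {x,y} (E - {{s,v}})
     \<and> {x,y} \<in> W \<and> is_path W xs s t \<and> length xs \<le> 4 \<and> card W \<le> 3
     \<and> (\<forall>ys. \<not> is_path (W - {{x,y}}) ys s t)"
      by (elim exE)
    have w1: "x \<noteq> y" "x \<in> V" "y \<in> V" "{x,y} \<notin> E" "W \<subseteq> insert {x,y} (E - {{s,v}})"
      "{x,y} \<in> W" "is_path W xs s t" "length xs \<le> 4" "card W \<le> 3"
      using w by simp_all
    have Wn: "\<And>ys. \<not> is_path (W - {{x,y}}) ys s t" using w by simp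
    have len: "length xs - 1 \<le> d" using w1(8) assms(3) by simp
    have cW: "card W \<le> card E" using w1(9) assms(2,6) by simp
    have res: "tt_graph V (insert {x,y} (E - {{s,v}})) s t \<and> card (insert {x,y} (E - {{s,v}})) = card E
     \<and> d_stronger d (card E) (insert {x,y} (E - {{s,v}})) s t E s t"
      by (rule main_case[OF g fin sv vs False nb w1(1) w1(2) w1(3) w1(4) w1(5) w1(6) w1(7) len Wn cW])
    show ?thesis
      by (rule exI[of _ V], rule exI[of _ "insert {x,y} (E - {{s,v}})"], rule exI[of _ s], rule exI[of _ t])
        (use res assms(5,6) in simp)
  qed
qed

end
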